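(* Let $\sigma>0$ and let $f,g,h$ be smooth, nowhere-vanishing real functions of $(y,s)$ on an open set $U\subset\mathbb{R}^2$ satisfying the bilinear equations $$\Big(\tfrac12 D_yD_s-1\Big)g\cdot g=-fh,\qquad \Big(\tfrac{1}{\sqrt{\sigma}}D_s+1\Big)f\cdot h=g^2,\qquad \Big(D_yD_s+\tfrac{2}{\sqrt{\sigma}}D_s+\sqrt{\sigma}D_y\Big)f\cdot h=0 .$$ Define the hodograph map $(y,s)\mapsto(x,t)$ by $$x=y-(\ln g)_s,\qquad t=s,$$ and the functions $$u=-(\ln g)_{ss},\qquad \rho=\frac{g^2}{fh}.$$ Then $\partial x/\partial y=fh/g^2=\rho^{-1}\neq 0$ and $\partial x/\partial s=u$; in particular the map is locally invertible, and on any subset where it is a diffeomorphism onto its image, $u$ and $\rho$, regarded as functions of $(x,t)$, satisfy the two-component Hunter–Saxton system with $\kappa=2$: $$\rho_t+(\rho u)_x=0,\qquad m_t+u\,m_x+2m\,u_x-\sigma\rho\rho_x=0,\quad m=2-u_{xx},$$ i.e. $u_{txx}-4u_x+2u_xu_{xx}+uu_{xxx}=-\sigma\rho\rho_x$ together with $\rho_t+(\rho u)_x=0$. *)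

theory Defs
  imports "HOL-Analysis.Analysis"
begin

text \<open>Functions of two real variables are represented as functions on real \<times> real.
  For the original variables the pair is (y,s); for the new variables it is (x,t).\<close>

definition pd1 :: "(real \<times> real \<Rightarrow> real) \<Rightarrow> real \<times> real \<Rightarrow> real" where
  "pd1 F = (\<lambda>(a, b). deriv (\<lambda>a'. F (a', b)) a)"

definition pd2 :: "(real \<times> real \<Rightarrow> real) \<Rightarrow> real \<times> real \<Rightarrow> real" where
  "pd2 F = (\<lambda>(a, b). deriv (\<lambda>b'. F (a, b')) b)"

coinductive smooth_on2 :: "(real \<times> real) set \<Rightarrow> (real \<times> real \<Rightarrow> real) \<Rightarrow> bool"
  for U where
  "\<lbrakk>\<forall>p\<in>U. F differentiable (at p); smooth_on2 U (pd1 F); smooth_on2 U (pd2 F)\<rbrakk>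
     \<Longrightarrow> smooth_on2 U F"

definition hirota_1 :: "(real \<times> real \<Rightarrow> real) \<Rightarrow> (real \<times> real \<Rightarrow> real) \<Rightarrow> real \<times> real \<Rightarrow> real" where
  "hirota_1 F G = (\<lambda>p. pd1 F p * G p - F p * pd1 G p)"

definition hirota_2 :: "(real \<times> real \<Rightarrow> real) \<Rightarrow> (real \<times> real \<Rightarrow> real) \<Rightarrow> real \<times> real \<Rightarrow> real" where
  "hirota_2 F G = (\<lambda>p. pd2 F p * G p - F p * pd2 G p)"

definition hirota_12 :: "(real \<times> real \<Rightarrow> real) \<Rightarrow> (real \<times> real \<Rightarrow> real) \<Rightarrow> real \<times> real \<Rightarrow> real" where
  "hirota_12 F G = (\<lambda>p. pd1 (pd2 F) p * G p - pd1 F p * pd2 G p - pd2 F p * pd1 G p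
                        + F p * pd1 (pd2 G) p)"

end

theory Submission
  imports Defs "HOL-Homology.Invariance_of_Domain"
begin

lemma line1_diff: "F differentiable (at (y,s)) \<Longrightarrow> (\<lambda>y'. F (y', s)) differentiable (at y)"
proof -
  assume a: "F differentiable (at (y,s))"
  have "(\<lambda>y'. (y', s)) differentiable (at y)" by (intro derivative_intros)
  then show ?thesis using differentiable_chain_at[of "\<lambda>y'. (y', s)" y F] a by (simp add: o_def)
qed

lemma line2_diff: "F differentiable (at (y,s)) \<Longrightarrow> (\<lambda>s'. F (y, s')) differentiable (at s)"
proof -
  assume a: "F differentiable (at (y,s))"
  have "(\<lambda>s'. (y, s')) differentiable (at s)" by (intro derivative_intros)
  then show ?thesis using differentiable_chain_at[of "\<lambda>s'. (y, s')" s F] a by (simp add: o_def)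
qed

lemma pd1_DERIV: "F differentiable (at (y,s)) \<Longrightarrow> ((\<lambda>y'. F (y', s)) has_real_derivative pd1 F (y,s)) (at y)"
  unfolding pd1_def using line1_diff DERIV_deriv_iff_real_differentiable by auto

lemma pd2_DERIV: "F differentiable (at (y,s)) \<Longrightarrow> ((\<lambda>s'. F (y, s')) has_real_derivative pd2 F (y,s)) (at s)"
  unfolding pd2_def using line2_diff DERIV_deriv_iff_real_differentiable by auto

lemma pd1_eqI: "((\<lambda>y'. F (y', snd p)) has_real_derivative D) (at (fst p)) \<Longrightarrow> pd1 F p = D"
  unfolding pd1_def by (cases p) (simp add: DERIV_imp_deriv)

lemma pd2_eqI: "((\<lambda>s'. F (fst p, s')) has_real_derivative D) (at (snd p)) \<Longrightarrow> pd2 F p = D"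
  unfolding pd2_def by (cases p) (simp add: DERIV_imp_deriv)

lemma pd1_DERIV': "F differentiable (at p) \<Longrightarrow> ((\<lambda>y'. F (y', snd p)) has_real_derivative pd1 F p) (at (fst p))"
  using pd1_DERIV[of F "fst p" "snd p"] by simp
lemma pd2_DERIV': "F differentiable (at p) \<Longrightarrow> ((\<lambda>s'. F (fst p, s')) has_real_derivative pd2 F p) (at (snd p))"
  using pd2_DERIV[of F "fst p" "snd p"] by simp

lemma pd1_frechet: assumes "(F has_derivative F') (at p)" shows "pd1 F p = F' (1,0)"
proof (rule pd1_eqI)
  have l: "linear F'" using assms has_derivative_linear by blast
  have "((\<lambda>y'. (y', snd p)) has_derivative (\<lambda>h. (h, 0))) (at (fst p))"
    by (auto intro!: derivative_eq_intros)
  from has_derivative_compose[OF this, of F F'] assms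
  have "((\<lambda>y'. F (y', snd p)) has_derivative (\<lambda>h. F' (h, 0))) (at (fst p))" by (cases p) auto
  moreover have "(\<lambda>h. F' (h, 0)) = (\<lambda>h. F' (1,0) * h)"
  proof
    fix h :: real
    have "F' (h,0) = F' (h *\<^sub>R (1,0))" by simp
    also have "\<dots> = h *\<^sub>R F' (1,0)" using linear_scale[OF l] by blast
    finally show "F' (h, 0) = F' (1,0) * h" by simp
  qed
  ultimately show "((\<lambda>y'. F (y', snd p)) has_real_derivative F' (1,0)) (at (fst p))"
    by (simp add: has_field_derivative_def)
qed

lemma pd2_frechet: assumes "(F has_derivative F') (at p)" shows "pd2 F p = F' (0,1)"
proof (rule pd2_eqI)
  have l: "linear F'" using assms has_derivative_linear by blast
  have "((\<lambda>s'. (fst p, s')) has_derivative (\<lambda>h. (0, h))) (at (snd p))"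
    by (auto intro!: derivative_eq_intros)
  from has_derivative_compose[OF this, of F F'] assms
  have "((\<lambda>s'. F (fst p, s')) has_derivative (\<lambda>h. F' (0, h))) (at (snd p))" by (cases p) auto
  moreover have "(\<lambda>h. F' (0, h)) = (\<lambda>h. F' (0,1) * h)"
  proof
    fix h :: real
    have "F' (0,h) = F' (h *\<^sub>R (0,1))" by simp
    also have "\<dots> = h *\<^sub>R F' (0,1)" using linear_scale[OF l] by blast
    finally show "F' (0, h) = F' (0,1) * h" by simp
  qed
  ultimately show "((\<lambda>s'. F (fst p, s')) has_real_derivative F' (0,1)) (at (snd p))"
    by (simp add: has_field_derivative_def)
qed

lemma pd1_local: assumes "open S" "p \<in> S" "\<And>q. q \<in> S \<Longrightarrow> F q = G q" shows "pd1 F p = pd1 G p"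
proof -
  obtain y s where p: "p = (y,s)" by (cases p)

  have "open ((\<lambda>y'. (y', s)) -` S)" by (rule continuous_open_vimage) (auto intro: assms continuous_intros)
  hence ev: "eventually (\<lambda>y'. (y',s) \<in> S) (nhds y)" using eventually_nhds_in_open[of "(\<lambda>y'. (y', s)) -` S" y] assms p by auto
  have "eventually (\<lambda>y'. F (y',s) = G (y',s)) (nhds y)" by (rule eventually_mono[OF ev]) (simp add: assms)
  hence "\<And>D. ((\<lambda>y'. F (y', s)) has_real_derivative D) (at y) = ((\<lambda>y'. G (y', s)) has_real_derivative D) (at y)"
    by (intro DERIV_cong_ev) auto
  thus ?thesis unfolding pd1_def deriv_def p by simp
qed

lemma pd2_local: assumes "open S" "p \<in> S" "\<And>q. q \<in> S \<Longrightarrow> F q = G q" shows "pd2 F p = pd2 G p"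
proof -
  obtain y s where p: "p = (y,s)" by (cases p)
  have "open ((\<lambda>s'. (y, s')) -` S)" by (rule continuous_open_vimage) (auto intro: assms continuous_intros)
  hence ev: "eventually (\<lambda>s'. (y,s') \<in> S) (nhds s)" using eventually_nhds_in_open[of "(\<lambda>s'. (y, s')) -` S" s] assms p by auto
  have "eventually (\<lambda>s'. F (y,s') = G (y,s')) (nhds s)" by (rule eventually_mono[OF ev]) (simp add: assms)
  hence "\<And>D. ((\<lambda>s'. F (y, s')) has_real_derivative D) (at s) = ((\<lambda>s'. G (y, s')) has_real_derivative D) (at s)"
    by (intro DERIV_cong_ev) auto
  thus ?thesis unfolding pd2_def deriv_def p by simp
qed

lemma DERIV_ln_abs: assumes "x \<noteq> (0::real)" shows "((\<lambda>x. ln \<bar>x\<bar>) has_real_derivative inverse x) (at x)"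
proof (cases "x > 0")
  case True
  have ev: "eventually (\<lambda>z. z > 0) (nhds x)" using True eventually_nhds_in_open[of "{0<..}" x] by auto
  have "(ln has_real_derivative inverse x) (at x)" using True by (rule DERIV_ln)
  moreover have "eventually (\<lambda>z. ln z = ln \<bar>z\<bar>) (nhds x)" by (rule eventually_mono[OF ev]) auto
  ultimately show ?thesis using DERIV_cong_ev[of x x ln "\<lambda>x. ln \<bar>x\<bar>" "inverse x" "inverse x"] by auto
next
  case False
  hence neg: "x < 0" using assms by auto
  have ev: "eventually (\<lambda>z. z < 0) (nhds x)" using neg eventually_nhds_in_open[of "{..<0}" x] by auto
  have "((\<lambda>z. ln (- z)) has_real_derivative inverse (-x) * (-1)) (at x)"
    using neg by (auto intro!: derivative_eq_intros simp: divide_inverse)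
  moreover have "eventually (\<lambda>z. ln (-z) = ln \<bar>z\<bar>) (nhds x)" by (rule eventually_mono[OF ev]) auto
  ultimately show ?thesis using DERIV_cong_ev[of x x "\<lambda>z. ln (-z)" "\<lambda>x. ln \<bar>x\<bar>" "inverse (-x) * (-1)" "inverse x"] by auto
qed

lemma pd1_const[simp]: "pd1 (\<lambda>q. c) p = 0" by (rule pd1_eqI) auto
lemma pd2_const[simp]: "pd2 (\<lambda>q. c) p = 0" by (rule pd2_eqI) auto
lemma pd1_fst[simp]: "pd1 fst p = 1" by (rule pd1_eqI) (auto intro!: derivative_eq_intros)
lemma pd2_fst[simp]: "pd2 fst p = 0" by (rule pd2_eqI) (auto intro!: derivative_eq_intros)
lemma pd1_snd[simp]: "pd1 snd p = 0" by (rule pd1_eqI) (auto intro!: derivative_eq_intros)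
lemma pd2_snd[simp]: "pd2 snd p = 1" by (rule pd2_eqI) (auto intro!: derivative_eq_intros)

lemma pd1_add: "F differentiable at p \<Longrightarrow> G differentiable at p \<Longrightarrow> pd1 (\<lambda>q. F q + G q) p = pd1 F p + pd1 G p"
  by (rule pd1_eqI) (rule DERIV_add[OF pd1_DERIV' pd1_DERIV'])
lemma pd2_add: "F differentiable at p \<Longrightarrow> G differentiable at p \<Longrightarrow> pd2 (\<lambda>q. F q + G q) p = pd2 F p + pd2 G p"
  by (rule pd2_eqI) (rule DERIV_add[OF pd2_DERIV' pd2_DERIV'])
lemma pd1_diff: "F differentiable at p \<Longrightarrow> G differentiable at p \<Longrightarrow> pd1 (\<lambda>q. F q - G q) p = pd1 F p - pd1 G p"
  by (rule pd1_eqI) (rule DERIV_diff[OF pd1_DERIV' pd1_DERIV'])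
lemma pd2_diff: "F differentiable at p \<Longrightarrow> G differentiable at p \<Longrightarrow> pd2 (\<lambda>q. F q - G q) p = pd2 F p - pd2 G p"
  by (rule pd2_eqI) (rule DERIV_diff[OF pd2_DERIV' pd2_DERIV'])
lemma pd1_minus: "F differentiable at p \<Longrightarrow> pd1 (\<lambda>q. - F q) p = - pd1 F p"
  by (rule pd1_eqI) (rule DERIV_minus[OF pd1_DERIV'])
lemma pd2_minus: "F differentiable at p \<Longrightarrow> pd2 (\<lambda>q. - F q) p = - pd2 F p"
  by (rule pd2_eqI) (rule DERIV_minus[OF pd2_DERIV'])
lemma pd1_mult: "F differentiable at p \<Longrightarrow> G differentiable at p \<Longrightarrow> pd1 (\<lambda>q. F q * G q) p = pd1 F p * G p + F p * pd1 G p"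
  by (rule pd1_eqI) (use DERIV_mult[OF pd1_DERIV'[of F p] pd1_DERIV'[of G p]] in \<open>auto simp: algebra_simps\<close>)
lemma pd2_mult: "F differentiable at p \<Longrightarrow> G differentiable at p \<Longrightarrow> pd2 (\<lambda>q. F q * G q) p = pd2 F p * G p + F p * pd2 G p"
  by (rule pd2_eqI) (use DERIV_mult[OF pd2_DERIV'[of F p] pd2_DERIV'[of G p]] in \<open>auto simp: algebra_simps\<close>)
lemma pd1_divide: "F differentiable at p \<Longrightarrow> G differentiable at p \<Longrightarrow> G p \<noteq> 0 \<Longrightarrow>
   pd1 (\<lambda>q. F q / G q) p = (pd1 F p * G p - F p * pd1 G p) / (G p * G p)"
  by (rule pd1_eqI) (use DERIV_divide[OF pd1_DERIV'[of F p] pd1_DERIV'[of G p]] in \<open>auto simp: algebra_simps\<close>)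
lemma pd2_divide: "F differentiable at p \<Longrightarrow> G differentiable at p \<Longrightarrow> G p \<noteq> 0 \<Longrightarrow>
   pd2 (\<lambda>q. F q / G q) p = (pd2 F p * G p - F p * pd2 G p) / (G p * G p)"
  by (rule pd2_eqI) (use DERIV_divide[OF pd2_DERIV'[of F p] pd2_DERIV'[of G p]] in \<open>auto simp: algebra_simps\<close>)
lemma pd1_power: "F differentiable at p \<Longrightarrow> pd1 (\<lambda>q. F q ^ n) p = of_nat n * F p ^ (n - 1) * pd1 F p"
  by (rule pd1_eqI) (use DERIV_power[OF pd1_DERIV'[of F p]] in \<open>auto simp: algebra_simps\<close>)
lemma pd2_power: "F differentiable at p \<Longrightarrow> pd2 (\<lambda>q. F q ^ n) p = of_nat n * F p ^ (n - 1) * pd2 F p"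
  by (rule pd2_eqI) (use DERIV_power[OF pd2_DERIV'[of F p]] in \<open>auto simp: algebra_simps\<close>)
lemma pd1_lnabs: "F differentiable at p \<Longrightarrow> F p \<noteq> 0 \<Longrightarrow> pd1 (\<lambda>q. ln \<bar>F q\<bar>) p = pd1 F p / F p"
  by (rule pd1_eqI) (use DERIV_chain2[OF DERIV_ln_abs pd1_DERIV'[of F p]] in \<open>auto simp: field_simps\<close>)
lemma pd2_lnabs: "F differentiable at p \<Longrightarrow> F p \<noteq> 0 \<Longrightarrow> pd2 (\<lambda>q. ln \<bar>F q\<bar>) p = pd2 F p / F p"
  by (rule pd2_eqI) (use DERIV_chain2[OF DERIV_ln_abs pd2_DERIV'[of F p]] in \<open>auto simp: field_simps\<close>)

lemma smooth_diff_at: "smooth_on2 U F \<Longrightarrow> p \<in> U \<Longrightarrow> F differentiable at p"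
  by (erule smooth_on2.cases) auto
lemma smooth_pd1: "smooth_on2 U F \<Longrightarrow> smooth_on2 U (pd1 F)"
  by (erule smooth_on2.cases) auto
lemma smooth_pd2: "smooth_on2 U F \<Longrightarrow> smooth_on2 U (pd2 F)"
  by (erule smooth_on2.cases) auto

lemma pd1_inverse: "F differentiable at p \<Longrightarrow> F p \<noteq> 0 \<Longrightarrow> pd1 (\<lambda>q. inverse (F q)) p = - (inverse (F p) * pd1 F p * inverse (F p))"
  by (rule pd1_eqI) (use DERIV_inverse'[OF pd1_DERIV'[of F p]] in auto)
lemma pd2_inverse: "F differentiable at p \<Longrightarrow> F p \<noteq> 0 \<Longrightarrow> pd2 (\<lambda>q. inverse (F q)) p = - (inverse (F p) * pd2 F p * inverse (F p))"
  by (rule pd2_eqI) (use DERIV_inverse'[OF pd2_DERIV'[of F p]] in auto)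

inductive_set salg :: "(real \<times> real) set \<Rightarrow> (real \<times> real \<Rightarrow> real) set" for U where
  sbase: "smooth_on2 U F \<Longrightarrow> F \<in> salg U"
| sconst: "(\<lambda>q. c) \<in> salg U"
| sfst: "fst \<in> salg U"
| ssnd: "snd \<in> salg U"
| sadd: "F \<in> salg U \<Longrightarrow> G \<in> salg U \<Longrightarrow> (\<lambda>q. F q + G q) \<in> salg U"
| smult: "F \<in> salg U \<Longrightarrow> G \<in> salg U \<Longrightarrow> (\<lambda>q. F q * G q) \<in> salg U"
| sinv: "F \<in> salg U \<Longrightarrow> \<forall>p\<in>U. F p \<noteq> 0 \<Longrightarrow> (\<lambda>q. inverse (F q)) \<in> salg U"

lemma salg_props:
  assumes "F \<in> salg U"
  shows "(\<forall>p\<in>U. F differentiable at p) \<and> (\<exists>G\<in>salg U. \<forall>p\<in>U. pd1 F p = G p) \<and> (\<exists>G\<in>salg U. \<forall>p\<in>U. pd2 F p = G p)"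
  using assms
proof (induction rule: salg.induct)
  case (sbase F)
  then show ?case using smooth_diff_at smooth_pd1 smooth_pd2 salg.sbase by blast
next
  case (sconst c)
  then show ?case using salg.sconst[where c=0 and U=U] by auto
next
  case sfst
  then show ?case using salg.sconst[where c=0 and U=U] salg.sconst[where c=1 and U=U] by (auto intro: derivative_intros bounded_linear_imp_differentiable bounded_linear_fst bounded_linear_snd)
next
  case ssnd
  then show ?case using salg.sconst[where c=0 and U=U] salg.sconst[where c=1 and U=U] by (auto intro: derivative_intros bounded_linear_imp_differentiable bounded_linear_fst bounded_linear_snd)
next
  case (sadd F G)
  then obtain F1 F2 G1 G2 where h: "F1 \<in> salg U" "F2 \<in> salg U" "G1 \<in> salg U" "G2 \<in> salg U"
    "\<forall>p\<in>U. pd1 F p = F1 p" "\<forall>p\<in>U. pd2 F p = F2 p" "\<forall>p\<in>U. pd1 G p = G1 p" "\<forall>p\<in>U. pd2 G p = G2 p"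
    and d: "\<forall>p\<in>U. F differentiable at p" "\<forall>p\<in>U. G differentiable at p" by blast
  show ?case
  proof (intro conjI)
    show "\<forall>p\<in>U. (\<lambda>q. F q + G q) differentiable at p" using d by (auto intro: derivative_intros bounded_linear_imp_differentiable bounded_linear_fst bounded_linear_snd)
    show "\<exists>H\<in>salg U. \<forall>p\<in>U. pd1 (\<lambda>q. F q + G q) p = H p"
      by (rule bexI[of _ "\<lambda>q. F1 q + G1 q"]) (use d h in \<open>auto simp: pd1_add intro: salg.sadd\<close>)
    show "\<exists>H\<in>salg U. \<forall>p\<in>U. pd2 (\<lambda>q. F q + G q) p = H p"
      by (rule bexI[of _ "\<lambda>q. F2 q + G2 q"]) (use d h in \<open>auto simp: pd2_add intro: salg.sadd\<close>)
  qed
next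
  case (smult F G)
  then obtain F1 F2 G1 G2 where h: "F1 \<in> salg U" "F2 \<in> salg U" "G1 \<in> salg U" "G2 \<in> salg U"
    "\<forall>p\<in>U. pd1 F p = F1 p" "\<forall>p\<in>U. pd2 F p = F2 p" "\<forall>p\<in>U. pd1 G p = G1 p" "\<forall>p\<in>U. pd2 G p = G2 p"
    and d: "\<forall>p\<in>U. F differentiable at p" "\<forall>p\<in>U. G differentiable at p" by blast
  show ?case
  proof (intro conjI)
    show "\<forall>p\<in>U. (\<lambda>q. F q * G q) differentiable at p" using d by (auto intro: derivative_intros bounded_linear_imp_differentiable bounded_linear_fst bounded_linear_snd)
    show "\<exists>H\<in>salg U. \<forall>p\<in>U. pd1 (\<lambda>q. F q * G q) p = H p"
      by (rule bexI[of _ "\<lambda>q. F1 q * G q + F q * G1 q"]) (use d h smult.hyps in \<open>auto simp: pd1_mult intro!: salg.sadd salg.smult\<close>)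
    show "\<exists>H\<in>salg U. \<forall>p\<in>U. pd2 (\<lambda>q. F q * G q) p = H p"
      by (rule bexI[of _ "\<lambda>q. F2 q * G q + F q * G2 q"]) (use d h smult.hyps in \<open>auto simp: pd2_mult intro!: salg.sadd salg.smult\<close>)
  qed
next
  case (sinv F)
  then obtain F1 F2 where h: "F1 \<in> salg U" "F2 \<in> salg U"
    "\<forall>p\<in>U. pd1 F p = F1 p" "\<forall>p\<in>U. pd2 F p = F2 p"
    and d: "\<forall>p\<in>U. F differentiable at p" by blast
  have i: "(\<lambda>q. inverse (F q)) \<in> salg U" using sinv salg.sinv by blast
  have m: "\<And>A B C. A \<in> salg U \<Longrightarrow> B \<in> salg U \<Longrightarrow> C \<in> salg U \<Longrightarrow> (\<lambda>q. - (A q * B q * C q)) \<in> salg U"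
  proof -
    fix A B C assume "A \<in> salg U" "B \<in> salg U" "C \<in> salg U"
    hence "(\<lambda>q. (- 1) * (A q * B q * C q)) \<in> salg U" by (intro salg.smult salg.sconst) (auto intro: salg.smult)
    thus "(\<lambda>q. - (A q * B q * C q)) \<in> salg U" by simp
  qed
  show ?case
  proof (intro conjI)
    show "\<forall>p\<in>U. (\<lambda>q. inverse (F q)) differentiable at p" using d sinv by (auto intro: derivative_intros bounded_linear_imp_differentiable bounded_linear_fst bounded_linear_snd)
    show "\<exists>H\<in>salg U. \<forall>p\<in>U. pd1 (\<lambda>q. inverse (F q)) p = H p"
      by (rule bexI[of _ "\<lambda>q. - (inverse (F q) * F1 q * inverse (F q))"]) (use d h sinv m i in \<open>auto simp: pd1_inverse\<close>)
    show "\<exists>H\<in>salg U. \<forall>p\<in>U. pd2 (\<lambda>q. inverse (F q)) p = H p"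
      by (rule bexI[of _ "\<lambda>q. - (inverse (F q) * F2 q * inverse (F q))"]) (use d h sinv m i in \<open>auto simp: pd2_inverse\<close>)
  qed
qed

lemma diff_transform: "open U \<Longrightarrow> p \<in> U \<Longrightarrow> \<forall>q\<in>U. F q = G q \<Longrightarrow> G differentiable at p \<Longrightarrow> F differentiable at p"
  unfolding differentiable_def using has_derivative_transform_within_open by (metis)

lemma salg_smooth: assumes "open U" "F \<in> salg U" shows "smooth_on2 U F"
proof -
  let ?X = "\<lambda>F. \<exists>G\<in>salg U. \<forall>p\<in>U. F p = G p"
  have "?X F" using assms by auto
  then show ?thesis
  proof (rule smooth_on2.coinduct)
    fix F assume "?X F"
    then obtain G where G: "G \<in> salg U" "\<forall>p\<in>U. F p = G p" by blast
    from salg_props[OF G(1)] obtain G1 G2 where h: "G1 \<in> salg U" "G2 \<in> salg U"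
      "\<forall>p\<in>U. pd1 G p = G1 p" "\<forall>p\<in>U. pd2 G p = G2 p" and d: "\<forall>p\<in>U. G differentiable at p" by blast
    have "\<forall>p\<in>U. F differentiable at p" using diff_transform[OF assms(1) _ G(2)] d by blast
    moreover have "?X (pd1 F)"
      using h G pd1_local[OF assms(1), of _ F G] by (intro bexI[of _ G1]) auto
    moreover have "?X (pd2 F)"
      using h G pd2_local[OF assms(1), of _ F G] by (intro bexI[of _ G2]) auto
    ultimately show "\<exists>Fa. F = Fa \<and> (\<forall>p\<in>U. Fa differentiable at p) \<and> (?X (pd1 Fa) \<or> smooth_on2 U (pd1 Fa)) \<and>
           (?X (pd2 Fa) \<or> smooth_on2 U (pd2 Fa))" by blast
  qed
qed

lemma salg_smooth': assumes "open U" "G \<in> salg U" "\<forall>p\<in>U. F p = G p" shows "smooth_on2 U F"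
proof -
  let ?X = "\<lambda>F. \<exists>G\<in>salg U. \<forall>p\<in>U. F p = G p"
  have "?X F" using assms by auto
  then show ?thesis
  proof (rule smooth_on2.coinduct)
    fix F assume "?X F"
    then obtain G where G: "G \<in> salg U" "\<forall>p\<in>U. F p = G p" by blast
    from salg_props[OF G(1)] obtain G1 G2 where h: "G1 \<in> salg U" "G2 \<in> salg U"
      "\<forall>p\<in>U. pd1 G p = G1 p" "\<forall>p\<in>U. pd2 G p = G2 p" and d: "\<forall>p\<in>U. G differentiable at p" by blast
    have "\<forall>p\<in>U. F differentiable at p" using diff_transform[OF assms(1) _ G(2)] d by blast
    moreover have "?X (pd1 F)"
      using h G pd1_local[OF assms(1), of _ F G] by (intro bexI[of _ G1]) auto
    moreover have "?X (pd2 F)"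
      using h G pd2_local[OF assms(1), of _ F G] by (intro bexI[of _ G2]) auto
    ultimately show "\<exists>Fa. F = Fa \<and> (\<forall>p\<in>U. Fa differentiable at p) \<and> (?X (pd1 Fa) \<or> smooth_on2 U (pd1 Fa)) \<and>
           (?X (pd2 Fa) \<or> smooth_on2 U (pd2 Fa))" by blast
  qed
qed

lemma dist_small: "\<bar>y - a\<bar> < t \<Longrightarrow> \<bar>s - b\<bar> < t \<Longrightarrow> dist (y,s) (a,b) < 2 * (t::real)"
proof -
  assume "\<bar>y - a\<bar> < t" "\<bar>s - b\<bar> < t"
  moreover have "dist (y,s) (a,b) \<le> \<bar>y - a\<bar> + \<bar>s - b\<bar>"
    using sqrt_sum_squares_le_sum_abs[of "dist y a" "dist s b"] by (simp add: dist_Pair_Pair dist_real_def)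
  ultimately show ?thesis by linarith
qed

lemma schwarz:
  assumes U: "open U" and sm: "smooth_on2 U F" and p: "p \<in> U"
  shows "pd1 (pd2 F) p = pd2 (pd1 F) p"
proof -
  obtain a b where pab: "p = (a,b)" by (cases p)
  obtain r where r: "r > 0" "ball p r \<subseteq> U" using U p open_contains_ball by blast
  define D1 where "D1 = pd2 (pd1 F)"
  define D2 where "D2 = pd1 (pd2 F)"
  have dF: "\<And>q. q \<in> U \<Longrightarrow> F differentiable at q" using smooth_diff_at sm by blast
  have d1: "\<And>q. q \<in> U \<Longrightarrow> pd1 F differentiable at q" using smooth_diff_at smooth_pd1 sm by blast
  have d2: "\<And>q. q \<in> U \<Longrightarrow> pd2 F differentiable at q" using smooth_diff_at smooth_pd2 sm by blast
  have cD1: "isCont D1 p" unfolding D1_def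
    using smooth_diff_at[OF smooth_pd2[OF smooth_pd1[OF sm]] p] differentiable_imp_continuous_within by blast
  have cD2: "isCont D2 p" unfolding D2_def
    using smooth_diff_at[OF smooth_pd1[OF smooth_pd2[OF sm]] p] differentiable_imp_continuous_within by blast
  have key: "\<exists>q1 q2. dist q1 p < 2*t \<and> dist q2 p < 2*t \<and> D1 q1 = D2 q2" if t: "0 < t" "4*t < r" for t
  proof -
    have inU: "(y,s) \<in> U" if "a \<le> y" "y \<le> a+t" "b \<le> s" "s \<le> b+t" for y s
    proof -
      have "\<bar>y - a\<bar> < t + t" "\<bar>s - b\<bar> < t + t" using that t by auto
      hence "dist (y,s) (a,b) < 2*(2*t)" using dist_small by (metis mult_2)
      hence "dist (y,s) (a,b) < r" using t by linarith
      thus ?thesis using r pab by (auto simp: dist_commute)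
    qed
    have "\<exists>z. a < z \<and> z < a+t \<and> ((F (a+t,b+t) - F (a+t,b)) - (F (a,b+t) - F (a,b)) = ((a+t) - a) * (pd1 F (z,b+t) - pd1 F (z,b)))"
      using t by (intro MVT2[of a "a+t" "\<lambda>y. F (y,b+t) - F (y,b)"]) (auto intro!: DERIV_diff pd1_DERIV dF inU)
    then obtain \<xi> where xi: "a < \<xi>" "\<xi> < a+t" "(F (a+t,b+t) - F (a+t,b)) - (F (a,b+t) - F (a,b)) = t * (pd1 F (\<xi>,b+t) - pd1 F (\<xi>,b))" by auto
    have "\<exists>z. b < z \<and> z < b+t \<and> pd1 F (\<xi>,b+t) - pd1 F (\<xi>,b) = ((b+t) - b) * D1 (\<xi>, z)"
      using t xi unfolding D1_def by (intro MVT2[of b "b+t" "\<lambda>s. pd1 F (\<xi>,s)"]) (auto intro!: pd2_DERIV d1 inU)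
    then obtain \<eta> where eta: "b < \<eta>" "\<eta> < b+t" "pd1 F (\<xi>,b+t) - pd1 F (\<xi>,b) = t * D1 (\<xi>, \<eta>)" by auto
    have "\<exists>z. b < z \<and> z < b+t \<and> ((F (a+t,b+t) - F (a,b+t)) - (F (a+t,b) - F (a,b)) = ((b+t) - b) * (pd2 F (a+t,z) - pd2 F (a,z)))"
      using t by (intro MVT2[of b "b+t" "\<lambda>s. F (a+t,s) - F (a,s)"]) (auto intro!: DERIV_diff pd2_DERIV dF inU)
    then obtain \<eta>' where eta': "b < \<eta>'" "\<eta>' < b+t" "(F (a+t,b+t) - F (a,b+t)) - (F (a+t,b) - F (a,b)) = t * (pd2 F (a+t,\<eta>') - pd2 F (a,\<eta>'))" by auto
    have "\<exists>z. a < z \<and> z < a+t \<and> pd2 F (a+t,\<eta>') - pd2 F (a,\<eta>') = ((a+t) - a) * D2 (z, \<eta>')"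
      using t eta' unfolding D2_def by (intro MVT2[of a "a+t" "\<lambda>y. pd2 F (y,\<eta>')"]) (auto intro!: pd1_DERIV d2 inU)
    then obtain \<xi>' where xi': "a < \<xi>'" "\<xi>' < a+t" "pd2 F (a+t,\<eta>') - pd2 F (a,\<eta>') = t * D2 (\<xi>', \<eta>')" by auto
    have "t * (t * D1 (\<xi>,\<eta>)) = t * (t * D2 (\<xi>',\<eta>'))"
      using xi(3) eta(3) eta'(3) xi'(3) by (metis (no_types, lifting) diff_add_eq diff_diff_eq2 add_diff_eq diff_add_cancel add.commute diff_diff_add)
    hence "D1 (\<xi>,\<eta>) = D2 (\<xi>',\<eta>')" using t by simp
    moreover have "dist (\<xi>,\<eta>) p < 2*t" "dist (\<xi>',\<eta>') p < 2*t"
      using dist_small[of \<xi> a t \<eta> b] dist_small[of \<xi>' a t \<eta>' b] xi eta xi' eta' pab by auto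
    ultimately show ?thesis by blast
  qed
  show ?thesis
  proof (rule ccontr)
    assume ne: "pd1 (pd2 F) p \<noteq> pd2 (pd1 F) p"
    define e where "e = \<bar>D1 p - D2 p\<bar> / 2"
    have e: "e > 0" using ne unfolding e_def D1_def D2_def by auto
    obtain d1 where d1: "d1 > 0" "\<And>q. dist q p < d1 \<Longrightarrow> dist (D1 q) (D1 p) < e"
      using cD1 e unfolding continuous_at_eps_delta by blast
    obtain d2 where d2: "d2 > 0" "\<And>q. dist q p < d2 \<Longrightarrow> dist (D2 q) (D2 p) < e"
      using cD2 e unfolding continuous_at_eps_delta by blast
    define t where "t = min (min d1 d2) r / 8"
    have t: "0 < t" "4*t < r" "2*t < d1" "2*t < d2" using d1 d2 r unfolding t_def by auto
    obtain q1 q2 where q: "dist q1 p < 2*t" "dist q2 p < 2*t" "D1 q1 = D2 q2" using key[OF t(1,2)] by blast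
    have "dist (D1 q1) (D1 p) < e" using q(1) t d1(2)[of q1] by linarith
    moreover have "dist (D2 q2) (D2 p) < e" using q(2) t d2(2)[of q2] by linarith
    ultimately have "dist (D1 q1) (D1 p) < e" "dist (D2 q2) (D2 p) < e" by auto
    hence "\<bar>D1 p - D2 p\<bar> < 2 * e" using q(3) by (simp add: dist_real_def)
    thus False unfolding e_def by simp
  qed
qed

lemma alg7:
  fixes a f g h F1 F2 H1 H2 F12 H12 rho :: real
  assumes nz: "f \<noteq> 0" "g \<noteq> 0" "h \<noteq> 0" "a > 0"
    and e2: "(1/a)*(F2*h - f*H2) + f*h = g^2"
    and e3: "(F12*h - F1*H2 - F2*H1 + f*H12) + (2/a)*(F2*h - f*H2) + a*(F1*h - f*H1) = 0"
    and r: "rho = g^2/(f*h)"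
  shows "2 + rho * (2*(1 - f*h/g^2) - (F12*f - F2*F1)/(f*f) - (H12*h - H2*H1)/(h*h)) = rho^2 * (2 + a*(F1/f - H1/h))"
proof -
  have s3: "F12*h + f*H12 = F1*H2 + F2*H1 - (2/a)*(F2*h - f*H2) - a*(F1*h - f*H1)" using e3 by linarith
  have W2: "F2/f - H2/h = a*(rho - 1)" using e2 nz r by (simp add: field_simps)
  have "(F12*f - F2*F1)/(f*f) + (H12*h - H2*H1)/(h*h) = (F12*h + f*H12)/(f*h) - F1*F2/(f*f) - H1*H2/(h*h)"
    using nz by (simp add: field_simps)
  also have "\<dots> = -(F1/f - H1/h)*(F2/f - H2/h) - (2/a)*(F2/f - H2/h) - a*(F1/f - H1/h)"
    unfolding s3 using nz by (simp add: field_simps)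
  also have "\<dots> = -(F1/f - H1/h)*(a*(rho - 1)) - (2/a)*(a*(rho - 1)) - a*(F1/f - H1/h)"
    unfolding W2 ..
  finally have X: "(F12*f - F2*F1)/(f*f) + (H12*h - H2*H1)/(h*h) = -(F1/f - H1/h)*(a*(rho - 1)) - 2*(rho - 1) - a*(F1/f - H1/h)"
    using nz by simp
  have fh: "f*h/g^2 = 1/rho" using r by simp
  have rnz: "rho \<noteq> 0" using r nz by simp
  have "2 + rho * (2*(1 - f*h/g^2) - (F12*f - F2*F1)/(f*f) - (H12*h - H2*H1)/(h*h))
     = 2 + rho * (2*(1 - 1/rho) - ((F12*f - F2*F1)/(f*f) + (H12*h - H2*H1)/(h*h)))" unfolding fh by simp
  also have "\<dots> = rho^2 * (2 + a*(F1/f - H1/h))" unfolding X using rnz nz by (simp add: field_simps power2_eq_square)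
  finally show ?thesis .
qed

locale sm2 = fixes U :: "(real \<times> real) set" assumes U_open: "open U"
begin

lemma sm_salg: "smooth_on2 U F \<longleftrightarrow> F \<in> salg U"
  using salg_smooth[OF U_open] salg.sbase by blast

lemma sm_const[simp]: "smooth_on2 U (\<lambda>q. c)" using sm_salg salg.sconst by blast
lemma sm_fst[simp]: "smooth_on2 U fst" using sm_salg salg.sfst by blast
lemma sm_snd[simp]: "smooth_on2 U snd" using sm_salg salg.ssnd by blast
lemma sm_add[simp]: "smooth_on2 U F \<Longrightarrow> smooth_on2 U G \<Longrightarrow> smooth_on2 U (\<lambda>q. F q + G q)"
  using sm_salg salg.sadd by blast
lemma sm_mult[simp]: "smooth_on2 U F \<Longrightarrow> smooth_on2 U G \<Longrightarrow> smooth_on2 U (\<lambda>q. F q * G q)"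
  using sm_salg salg.smult by blast
lemma sm_minus[simp]: "smooth_on2 U F \<Longrightarrow> smooth_on2 U (\<lambda>q. - F q)"
  using sm_mult[of "\<lambda>q. -1" F] by simp
lemma sm_diff[simp]: "smooth_on2 U F \<Longrightarrow> smooth_on2 U G \<Longrightarrow> smooth_on2 U (\<lambda>q. F q - G q)"
  using sm_add[of F "\<lambda>q. - G q"] by simp
lemma sm_inverse[simp]: "smooth_on2 U F \<Longrightarrow> (\<And>p. p \<in> U \<Longrightarrow> F p \<noteq> 0) \<Longrightarrow> smooth_on2 U (\<lambda>q. inverse (F q))"
  using sm_salg salg.sinv by blast
lemma sm_divide[simp]: "smooth_on2 U F \<Longrightarrow> smooth_on2 U G \<Longrightarrow> (\<And>p. p \<in> U \<Longrightarrow> G p \<noteq> 0) \<Longrightarrow> smooth_on2 U (\<lambda>q. F q / G q)"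
  using sm_mult[of F "\<lambda>q. inverse (G q)"] sm_inverse[of G] by (simp add: divide_inverse)
lemma sm_power[simp]: "smooth_on2 U F \<Longrightarrow> smooth_on2 U (\<lambda>q. F q ^ n)"
  by (induction n) auto
lemma sm_pd1[simp]: "smooth_on2 U F \<Longrightarrow> smooth_on2 U (pd1 F)" by (rule smooth_pd1)
lemma sm_pd2[simp]: "smooth_on2 U F \<Longrightarrow> smooth_on2 U (pd2 F)" by (rule smooth_pd2)
lemma sm_cong: "smooth_on2 U F \<Longrightarrow> (\<And>p. p \<in> U \<Longrightarrow> G p = F p) \<Longrightarrow> smooth_on2 U G"
  using salg_smooth'[OF U_open] sm_salg by blast

lemma dat: "smooth_on2 U F \<Longrightarrow> p \<in> U \<Longrightarrow> F differentiable at p" by (rule smooth_diff_at)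

lemma s1_add[simp]: "smooth_on2 U F \<Longrightarrow> smooth_on2 U G \<Longrightarrow> p \<in> U \<Longrightarrow> pd1 (\<lambda>q. F q + G q) p = pd1 F p + pd1 G p"
  by (intro pd1_add dat)
lemma s2_add[simp]: "smooth_on2 U F \<Longrightarrow> smooth_on2 U G \<Longrightarrow> p \<in> U \<Longrightarrow> pd2 (\<lambda>q. F q + G q) p = pd2 F p + pd2 G p"
  by (intro pd2_add dat)
lemma s1_diff[simp]: "smooth_on2 U F \<Longrightarrow> smooth_on2 U G \<Longrightarrow> p \<in> U \<Longrightarrow> pd1 (\<lambda>q. F q - G q) p = pd1 F p - pd1 G p"
  by (intro pd1_diff dat)
lemma s2_diff[simp]: "smooth_on2 U F \<Longrightarrow> smooth_on2 U G \<Longrightarrow> p \<in> U \<Longrightarrow> pd2 (\<lambda>q. F q - G q) p = pd2 F p - pd2 G p"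
  by (intro pd2_diff dat)
lemma s1_mult[simp]: "smooth_on2 U F \<Longrightarrow> smooth_on2 U G \<Longrightarrow> p \<in> U \<Longrightarrow> pd1 (\<lambda>q. F q * G q) p = pd1 F p * G p + F p * pd1 G p"
  by (intro pd1_mult dat)
lemma s2_mult[simp]: "smooth_on2 U F \<Longrightarrow> smooth_on2 U G \<Longrightarrow> p \<in> U \<Longrightarrow> pd2 (\<lambda>q. F q * G q) p = pd2 F p * G p + F p * pd2 G p"
  by (intro pd2_mult dat)
lemma s1_minus[simp]: "smooth_on2 U F \<Longrightarrow> p \<in> U \<Longrightarrow> pd1 (\<lambda>q. - F q) p = - pd1 F p"
  by (intro pd1_minus dat)
lemma s2_minus[simp]: "smooth_on2 U F \<Longrightarrow> p \<in> U \<Longrightarrow> pd2 (\<lambda>q. - F q) p = - pd2 F p"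
  by (intro pd2_minus dat)
lemma s1_divide[simp]: "smooth_on2 U F \<Longrightarrow> smooth_on2 U G \<Longrightarrow> p \<in> U \<Longrightarrow> G p \<noteq> 0 \<Longrightarrow>
    pd1 (\<lambda>q. F q / G q) p = (pd1 F p * G p - F p * pd1 G p) / (G p * G p)"
  by (intro pd1_divide dat)
lemma s2_divide[simp]: "smooth_on2 U F \<Longrightarrow> smooth_on2 U G \<Longrightarrow> p \<in> U \<Longrightarrow> G p \<noteq> 0 \<Longrightarrow>
    pd2 (\<lambda>q. F q / G q) p = (pd2 F p * G p - F p * pd2 G p) / (G p * G p)"
  by (intro pd2_divide dat)
lemma s1_power[simp]: "smooth_on2 U F \<Longrightarrow> p \<in> U \<Longrightarrow> pd1 (\<lambda>q. F q ^ n) p = of_nat n * F p ^ (n - 1) * pd1 F p"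
  by (intro pd1_power dat)
lemma s2_power[simp]: "smooth_on2 U F \<Longrightarrow> p \<in> U \<Longrightarrow> pd2 (\<lambda>q. F q ^ n) p = of_nat n * F p ^ (n - 1) * pd2 F p"
  by (intro pd2_power dat)

lemma loc1: "p \<in> U \<Longrightarrow> (\<And>q. q \<in> U \<Longrightarrow> F q = G q) \<Longrightarrow> pd1 F p = pd1 G p"
  using pd1_local[OF U_open] by blast
lemma loc2: "p \<in> U \<Longrightarrow> (\<And>q. q \<in> U \<Longrightarrow> F q = G q) \<Longrightarrow> pd2 F p = pd2 G p"
  using pd2_local[OF U_open] by blast

lemma schw: "smooth_on2 U F \<Longrightarrow> p \<in> U \<Longrightarrow> pd2 (pd1 F) p = pd1 (pd2 F) p"
  using schwarz[OF U_open] by metis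

end

locale hs = sm2 U for U :: "(real \<times> real) set" +
  fixes \<sigma> :: real and f g h :: "real \<times> real \<Rightarrow> real"
  assumes sigma_pos: "\<sigma> > 0"
    and smf[simp]: "smooth_on2 U f" and smg[simp]: "smooth_on2 U g" and smh[simp]: "smooth_on2 U h"
    and nonzero: "\<forall>p\<in>U. f p \<noteq> 0 \<and> g p \<noteq> 0 \<and> h p \<noteq> 0"
    and eq1: "\<forall>p\<in>U. (1/2) * hirota_12 g g p - g p * g p = - (f p * h p)"
    and eq2: "\<forall>p\<in>U. (1 / sqrt \<sigma>) * hirota_2 f h p + f p * h p = (g p)\<^sup>2"
    and eq3: "\<forall>p\<in>U. hirota_12 f h p + (2 / sqrt \<sigma>) * hirota_2 f h p
                      + sqrt \<sigma> * hirota_1 f h p = 0"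
begin

lemma nzf[simp]: "p \<in> U \<Longrightarrow> f p \<noteq> 0" using nonzero by auto
lemma nzg[simp]: "p \<in> U \<Longrightarrow> g p \<noteq> 0" using nonzero by auto
lemma nzh[simp]: "p \<in> U \<Longrightarrow> h p \<noteq> 0" using nonzero by auto

definition "rho = (\<lambda>q. (g q)^2 / (f q * h q))"
definition "S = (\<lambda>q. pd2 g q / g q)"
definition "uS = (\<lambda>q. - pd2 S q)"
definition "Dx G = (\<lambda>q. rho q * pd1 G q)"
definition "Dt G = (\<lambda>q. pd2 G q - uS q * rho q * pd1 G q)"

lemma nzrho[simp]: "p \<in> U \<Longrightarrow> rho p \<noteq> 0" by (simp add: rho_def)
lemma sm_rho[simp]: "smooth_on2 U rho" unfolding rho_def by simp
lemma sm_S[simp]: "smooth_on2 U S" unfolding S_def by simp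
lemma sm_uS[simp]: "smooth_on2 U uS" unfolding uS_def by simp
lemma sm_Dx[simp]: "smooth_on2 U G \<Longrightarrow> smooth_on2 U (Dx G)" unfolding Dx_def by simp
lemma sm_Dt[simp]: "smooth_on2 U G \<Longrightarrow> smooth_on2 U (Dt G)" unfolding Dt_def by simp

lemma lng: "p \<in> U \<Longrightarrow> pd2 (\<lambda>q. ln \<bar>g q\<bar>) p = S p"
  unfolding S_def by (intro pd2_lnabs dat) auto

lemma pd1S: "p \<in> U \<Longrightarrow> pd1 S p = 1 - f p * h p / (g p)^2"
proof -
  assume p: "p \<in> U"
  have "pd1 S p = (pd1 (pd2 g) p * g p - pd2 g p * pd1 g p) / (g p * g p)" unfolding S_def using p by simp
  moreover have "(1/2) * hirota_12 g g p - g p * g p = - (f p * h p)" using eq1 p by auto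
  ultimately show ?thesis using p unfolding hirota_12_def by (simp add: field_simps power2_eq_square)
qed

lemma cont_id: "p \<in> U \<Longrightarrow> pd2 rho p + (rho p)^2 * pd1 uS p = 0"
proof -
  assume p: "p \<in> U"
  have "pd1 uS p = - pd1 (pd2 S) p" unfolding uS_def using p by simp
  also have "\<dots> = - pd2 (pd1 S) p" using schw[of S p] p by simp
  also have "\<dots> = - pd2 (\<lambda>q. 1 - f q * h q / (g q)^2) p" using loc2[OF p, of "pd1 S"] pd1S by simp
  also have "\<dots> = pd2 (\<lambda>q. f q * h q / (g q)^2) p" using p by simp
  finally have "pd1 uS p = pd2 (\<lambda>q. f q * h q / (g q)^2) p" .
  thus ?thesis using p unfolding rho_def by (simp add: field_simps power2_eq_square)
qed

end

lemma aux_div: "(a::real) \<noteq> 0 \<Longrightarrow> X * a / (a * a) = X / a" by (simp add: field_simps)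

lemma aux_div2: "(a::real) \<noteq> 0 \<Longrightarrow> a * a * (X / a) = a * X" by (simp add: field_simps)

context hs begin

definition "K = (\<lambda>q. 2 + sqrt \<sigma> * (pd1 f q / f q - pd1 h q / h q))"
lemma sm_K[simp]: "smooth_on2 U K" unfolding K_def by simp

lemma commut: "smooth_on2 U G \<Longrightarrow> p \<in> U \<Longrightarrow> Dt (Dx G) p = Dx (Dt G) p"
proof -
  assume G: "smooth_on2 U G" and p: "p \<in> U"
  have c: "pd2 rho p = - ((rho p)^2 * pd1 uS p)" using cont_id[OF p] by simp
  have s: "pd2 (pd1 G) p = pd1 (pd2 G) p" using schw[OF G p] .
  show ?thesis unfolding Dt_def Dx_def using G p c s by (simp add: algebra_simps power2_eq_square)
qed

lemma pd2rho: "p \<in> U \<Longrightarrow> pd2 rho p = rho p * (2 * S p - pd2 f p / f p - pd2 h p / h p)"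
  unfolding rho_def S_def by (simp add: field_simps power2_eq_square)

lemma A_eq: "p \<in> U \<Longrightarrow> Dx uS p = - (2 * S p - pd2 f p / f p - pd2 h p / h p)"
proof -
  assume p: "p \<in> U"
  have "Dx uS p = - pd2 rho p / rho p" using cont_id[OF p] nzrho[OF p] unfolding Dx_def
    by (simp add: field_simps power2_eq_square)
  thus ?thesis using pd2rho[OF p] nzrho[OF p] by simp
qed

lemma B_eq: "p \<in> U \<Longrightarrow> Dx (Dx uS) p = - rho p * (2 * pd1 S p - pd1 (\<lambda>q. pd2 f q / f q) p - pd1 (\<lambda>q. pd2 h q / h q) p)"
proof -
  assume p: "p \<in> U"
  have "pd1 (Dx uS) p = pd1 (\<lambda>q. - (2 * S q - pd2 f q / f q - pd2 h q / h q)) p"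
    by (rule loc1[OF p]) (rule A_eq)
  also have "\<dots> = - (2 * pd1 S p - pd1 (\<lambda>q. pd2 f q / f q) p - pd1 (\<lambda>q. pd2 h q / h q) p)"
    using p by (simp del: s1_divide)
  finally have e: "pd1 (Dx uS) p = - (2 * pd1 S p - pd1 (\<lambda>q. pd2 f q / f q) p - pd1 (\<lambda>q. pd2 h q / h q) p)" .
  have "Dx (Dx uS) p = rho p * pd1 (Dx uS) p" unfolding Dx_def[of "Dx uS"] ..
  thus ?thesis unfolding e by (simp add: algebra_simps)
qed

lemma mm_eq: "p \<in> U \<Longrightarrow> 2 - Dx (Dx uS) p = (rho p)^2 * K p"
proof -
  assume p: "p \<in> U"
  have e2: "(1/sqrt \<sigma>)*(pd2 f p*h p - f p*pd2 h p) + f p*h p = (g p)^2" using eq2 p unfolding hirota_2_def by auto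
  have e3: "(pd1 (pd2 f) p*h p - pd1 f p*pd2 h p - pd2 f p*pd1 h p + f p*pd1 (pd2 h) p)
     + (2/sqrt \<sigma>)*(pd2 f p*h p - f p*pd2 h p) + sqrt \<sigma>*(pd1 f p*h p - f p*pd1 h p) = 0"
    using eq3 p unfolding hirota_12_def hirota_2_def hirota_1_def by auto
  have "2 - Dx (Dx uS) p = 2 + rho p * (2*(1 - f p*h p/(g p)^2) - (pd1 (pd2 f) p*f p - pd2 f p*pd1 f p)/(f p*f p)
          - (pd1 (pd2 h) p*h p - pd2 h p*pd1 h p)/(h p*h p))"
    unfolding B_eq[OF p] pd1S[OF p] using p by simp
  also have "\<dots> = (rho p)^2 * (2 + sqrt \<sigma> * (pd1 f p / f p - pd1 h p / h p))"
    by (rule alg7[OF _ _ _ _ e2 e3]) (use p sigma_pos in \<open>auto simp: rho_def\<close>)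
  finally show ?thesis unfolding K_def by simp
qed

lemma K_s: "p \<in> U \<Longrightarrow> pd2 K p = \<sigma> * pd1 rho p"
proof -
  assume p: "p \<in> U"
  have sq: "sqrt \<sigma> * sqrt \<sigma> = \<sigma>" "sqrt \<sigma> > 0" using sigma_pos by auto
  have r: "rho q = 1 + (pd2 f q / f q - pd2 h q / h q) / sqrt \<sigma>" if q: "q \<in> U" for q
  proof -
    have "(1/sqrt \<sigma>)*(pd2 f q*h q - f q*pd2 h q) + f q*h q = (g q)^2" using eq2 q unfolding hirota_2_def by auto
    thus ?thesis using q sq unfolding rho_def by (simp add: field_simps)
  qed
  have "pd1 rho p = pd1 (\<lambda>q. 1 + (pd2 f q / f q - pd2 h q / h q) / sqrt \<sigma>) p"
    by (rule loc1[OF p]) (rule r)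
  also have "\<dots> = ((pd1 (pd2 f) p * f p - pd2 f p * pd1 f p) / (f p * f p)
                  - (pd1 (pd2 h) p * h p - pd2 h p * pd1 h p) / (h p * h p)) / sqrt \<sigma>"
  proof -
    have sq3: "X * sqrt \<sigma> / \<sigma> = X / sqrt \<sigma>" for X
    proof -
      have "X * sqrt \<sigma> / \<sigma> = X * sqrt \<sigma> / (sqrt \<sigma> * sqrt \<sigma>)" by (simp only: sq(1))
      also have "\<dots> = X / sqrt \<sigma>" using aux_div[of "sqrt \<sigma>" X] sq(2) by simp
      finally show ?thesis .
    qed
    show ?thesis using p sq sq3 by simp
  qed
  finally have a: "pd1 rho p = ((pd1 (pd2 f) p * f p - pd2 f p * pd1 f p) / (f p * f p)
                  - (pd1 (pd2 h) p * h p - pd2 h p * pd1 h p) / (h p * h p)) / sqrt \<sigma>" .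
  have "pd2 K p = sqrt \<sigma> * ((pd2 (pd1 f) p * f p - pd1 f p * pd2 f p) / (f p * f p)
                  - (pd2 (pd1 h) p * h p - pd1 h p * pd2 h p) / (h p * h p))"
    unfolding K_def using p by simp
  also have "\<dots> = sqrt \<sigma> * ((pd1 (pd2 f) p * f p - pd2 f p * pd1 f p) / (f p * f p)
                  - (pd1 (pd2 h) p * h p - pd2 h p * pd1 h p) / (h p * h p))"
    using schw[OF smf p] schw[OF smh p] by (simp add: mult.commute)
  also have "\<dots> = \<sigma> * pd1 rho p"
  proof -
    have "\<And>X. \<sigma> * (X / sqrt \<sigma>) = sqrt \<sigma> * sqrt \<sigma> * (X / sqrt \<sigma>)" by (simp only: sq(1))
    moreover have "\<And>X. sqrt \<sigma> * sqrt \<sigma> * (X / sqrt \<sigma>) = sqrt \<sigma> * X" using aux_div2[of "sqrt \<sigma>"] sq(2) by simp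
    ultimately have eqX: "\<And>X. \<sigma> * (X / sqrt \<sigma>) = sqrt \<sigma> * X" by metis
    show ?thesis unfolding a by (rule eqX[symmetric])
  qed
  finally show ?thesis .
qed

lemma main_ys: "p \<in> U \<Longrightarrow> pd2 (\<lambda>q. 2 - Dx (Dx uS) q) p + 2 * (2 - Dx (Dx uS) p) * Dx uS p - \<sigma> * (rho p)^2 * pd1 rho p = 0"
proof -
  assume p: "p \<in> U"
  have "pd2 (\<lambda>q. 2 - Dx (Dx uS) q) p = pd2 (\<lambda>q. (rho q)^2 * K q) p"
    by (rule loc2[OF p]) (rule mm_eq)
  also have "\<dots> = 2 * rho p * pd2 rho p * K p + (rho p)^2 * (\<sigma> * pd1 rho p)" using p K_s[OF p] by simp
  finally have a: "pd2 (\<lambda>q. 2 - Dx (Dx uS) q) p = 2 * rho p * pd2 rho p * K p + (rho p)^2 * (\<sigma> * pd1 rho p)" .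
  have b: "Dx uS p = - pd2 rho p / rho p" using cont_id[OF p] nzrho[OF p] unfolding Dx_def
    by (simp add: field_simps power2_eq_square)
  show ?thesis unfolding a b mm_eq[OF p] using nzrho[OF p] by (simp add: field_simps power2_eq_square)
qed

end

lemma lin2: "linear F' \<Longrightarrow> F' (c, d) = c * F' (1,0) + d * F' (0,1::real)"
proof -
  assume l: "linear F'"
  have "(c,d) = c *\<^sub>R (1,0) + d *\<^sub>R (0::real,1::real)" by simp
  hence "F' (c,d) = F' (c *\<^sub>R (1,0) + d *\<^sub>R (0,1))" by simp
  also have "\<dots> = c *\<^sub>R F' (1,0) + d *\<^sub>R F' (0,1)" by (simp only: linear_add[OF l] linear_scale[OF l])
  finally show ?thesis by simp
qed

context hs begin

definition "xfun = (\<lambda>p. fst p - pd2 (\<lambda>q. ln \<bar>g q\<bar>) p)"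
definition "Phi = (\<lambda>p. (fst p - pd2 (\<lambda>q. ln \<bar>g q\<bar>) p, snd p))"

lemma x_eq: "q \<in> U \<Longrightarrow> xfun q = fst q - S q" unfolding xfun_def using lng by simp

lemma x_diff: "p \<in> U \<Longrightarrow> xfun differentiable at p"
  by (rule diff_transform[OF U_open _ _ dat[of "\<lambda>q. fst q - S q"]]) (auto simp: x_eq)

lemma pd1x: "p \<in> U \<Longrightarrow> pd1 xfun p = f p * h p / (g p)^2"
proof -
  assume p: "p \<in> U"
  have "pd1 xfun p = pd1 (\<lambda>q. fst q - S q) p" by (rule loc1[OF p]) (rule x_eq)
  also have "\<dots> = 1 - pd1 S p" using p by simp
  finally show ?thesis using pd1S[OF p] by simp
qed

lemma pd2x: "p \<in> U \<Longrightarrow> pd2 xfun p = uS p"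
proof -
  assume p: "p \<in> U"
  have "pd2 xfun p = pd2 (\<lambda>q. fst q - S q) p" by (rule loc2[OF p]) (rule x_eq)
  also have "\<dots> = - pd2 S p" using p by simp
  finally show ?thesis unfolding uS_def by simp
qed

lemma u_eq: "p \<in> U \<Longrightarrow> - pd2 (pd2 (\<lambda>q. ln \<bar>g q\<bar>)) p = uS p"
  unfolding uS_def using loc2[of p "pd2 (\<lambda>q. ln \<bar>g q\<bar>)" S] lng by simp

lemma rho_x: "p \<in> U \<Longrightarrow> rho p * pd1 xfun p = 1"
  using pd1x unfolding rho_def by (simp add: field_simps)

lemma Phi_eq: "Phi = (\<lambda>p. (xfun p, snd p))" unfolding Phi_def xfun_def ..

lemma Phi_cont: "p \<in> U \<Longrightarrow> isCont Phi p"
proof -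
  assume p: "p \<in> U"
  have "isCont xfun p" using x_diff[OF p] differentiable_imp_continuous_within by blast
  thus ?thesis unfolding Phi_eq by (intro continuous_intros)
qed

lemma local_inj: "p \<in> U \<Longrightarrow> \<exists>V. p \<in> V \<and> open V \<and> V \<subseteq> U \<and> inj_on Phi V \<and> open (Phi ` V)"
proof -
  assume p: "p \<in> U"
  define k where "k = (\<lambda>q. f q * h q / (g q)^2)"
  have "k p \<noteq> 0" using p unfolding k_def by simp
  hence kp: "k p * k p > 0" by (metis not_real_square_gt_zero)
  have "isCont k p" unfolding k_def using dat[OF smf p] dat[OF smg p] dat[OF smh p] p
    by (intro continuous_intros differentiable_imp_continuous_within) auto
  hence "((\<lambda>q. k q * k p) \<longlongrightarrow> k p * k p) (at p)" by (intro tendsto_intros) (simp add: isCont_def)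
  hence "eventually (\<lambda>q. k q * k p > 0) (at p)" using kp order_tendstoD(1) by blast
  then obtain r0 where r0: "r0 > 0" "\<And>q. q \<noteq> p \<Longrightarrow> dist q p < r0 \<Longrightarrow> k q * k p > 0"
    unfolding eventually_at by blast
  obtain r1 where r1: "r1 > 0" "ball p r1 \<subseteq> U" using U_open p open_contains_ball by blast
  define r where "r = min r0 r1"
  have r: "r > 0" "ball p r \<subseteq> U" using r0 r1 unfolding r_def by auto
  have kpos: "k q * k p > 0" if "q \<in> ball p r" for q
    using that r0 kp unfolding r_def by (cases "q = p") (auto simp: dist_commute)
  have inj: "inj_on Phi (ball p r)"
  proof (rule inj_onI)
    fix q1 q2 assume q1: "q1 \<in> ball p r" and q2: "q2 \<in> ball p r" and e: "Phi q1 = Phi q2"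
    have sn: "snd q1 = snd q2" and xe: "xfun q1 = xfun q2" using e unfolding Phi_eq by auto
    show "q1 = q2"
    proof (rule ccontr)
      assume ne: "q1 \<noteq> q2"
      hence fne: "fst q1 \<noteq> fst q2" using sn prod_eq_iff by blast
      have gen: False if a: "a \<in> ball p r" "b \<in> ball p r" "snd a = snd b" "xfun a = xfun b" "fst a < fst b" for a b
      proof -
        define s where "s = snd a"
        have seg: "(y, s) \<in> ball p r" if y: "fst a \<le> y" "y \<le> fst b" for y
        proof -
          define u where "u = (fst b - y) / (fst b - fst a)"
          define v where "v = (y - fst a) / (fst b - fst a)"
          have d: "fst b - fst a > 0" using a(5) by simp
          have uv: "u \<ge> 0" "v \<ge> 0" "u + v = 1" using y d unfolding u_def v_def
            by (auto simp: add_divide_distrib[symmetric])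
          have "u *\<^sub>R a + v *\<^sub>R b \<in> ball p r" using convexD[OF convex_ball a(1) a(2) uv] .
          moreover have "u *\<^sub>R a + v *\<^sub>R b = (y, s)"
          proof -
            have dd: "fst b - fst a \<noteq> 0" using d by simp
            have "u * fst a + v * fst b = ((fst b - y) * fst a + (y - fst a) * fst b) / (fst b - fst a)"
              unfolding u_def v_def by (simp add: add_divide_distrib)
            also have "\<dots> = y * (fst b - fst a) / (fst b - fst a)" by (simp add: algebra_simps)
            also have "\<dots> = y" using dd by simp
            finally have "u * fst a + v * fst b = y" .
            moreover have "u * snd a + v * snd b = s" using uv a(3) unfolding s_def
              by (metis distrib_right mult_1)
            ultimately show ?thesis by (simp add: prod_eq_iff)
          qed
          ultimately show ?thesis by simp
        qed
        have "\<exists>z. fst a < z \<and> z < fst b \<and> xfun (fst b, s) - xfun (fst a, s) = (fst b - fst a) * pd1 xfun (z, s)"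
          using a(5) seg r(2) by (intro MVT2) (auto intro!: pd1_DERIV x_diff)
        then obtain z where z: "fst a < z" "z < fst b" "xfun (fst b, s) - xfun (fst a, s) = (fst b - fst a) * pd1 xfun (z, s)" by blast
        have "xfun (fst b, s) = xfun (fst a, s)" using a(3,4) unfolding s_def by (metis prod.collapse)
        hence "pd1 xfun (z,s) = 0" using z a(5) by simp
        moreover have "(z,s) \<in> ball p r" using seg z by auto
        ultimately have "k (z,s) = 0" using pd1x r(2) unfolding k_def by auto
        thus False using kpos[of "(z,s)"] \<open>(z,s) \<in> ball p r\<close> by simp
      qed
      show False
      proof (cases "fst q1 < fst q2")
        case True then show ?thesis using gen[OF q1 q2 sn xe] by blast
      next
        case False then show ?thesis using gen[OF q2 q1 sn[symmetric] xe[symmetric]] fne by linarith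
      qed
    qed
  qed
  have "continuous_on (ball p r) Phi" using Phi_cont r(2)
    by (intro continuous_at_imp_continuous_on) auto
  hence "open (Phi ` ball p r)" using invariance_of_domain[OF _ open_ball inj] by blast
  thus ?thesis using inj r by (intro exI[of _ "ball p r"]) auto
qed

end

locale hs3 = hs +
  fixes V :: "(real \<times> real) set" and \<Psi> :: "real \<times> real \<Rightarrow> real \<times> real"
  assumes VU: "V \<subseteq> U" and V_open: "open V" and W_open: "open (Phi ` V)"
    and left: "\<forall>p\<in>V. \<Psi> (Phi p) = p" and right: "\<forall>q\<in>Phi ` V. Phi (\<Psi> q) = q"
    and d1: "\<forall>q\<in>Phi ` V. (\<lambda>q. fst (\<Psi> q)) differentiable at q"
    and d2: "\<forall>q\<in>Phi ` V. (\<lambda>q. snd (\<Psi> q)) differentiable at q"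
begin

lemma PsiV: "q \<in> Phi ` V \<Longrightarrow> \<Psi> q \<in> V" using left by auto
lemma PsiU: "q \<in> Phi ` V \<Longrightarrow> \<Psi> q \<in> U" using PsiV VU by blast

lemma locW1: "q \<in> Phi ` V \<Longrightarrow> (\<And>q'. q' \<in> Phi ` V \<Longrightarrow> F q' = G q') \<Longrightarrow> pd1 F q = pd1 G q"
  using pd1_local[OF W_open] by blast
lemma locW2: "q \<in> Phi ` V \<Longrightarrow> (\<And>q'. q' \<in> Phi ` V \<Longrightarrow> F q' = G q') \<Longrightarrow> pd2 F q = pd2 G q"
  using pd2_local[OF W_open] by blast

lemma chain:
  assumes G: "smooth_on2 U G" and q: "q \<in> Phi ` V"
  shows "pd1 (\<lambda>q. G (\<Psi> q)) q = Dx G (\<Psi> q) \<and> pd2 (\<lambda>q. G (\<Psi> q)) q = Dt G (\<Psi> q)"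
proof -
  define p where "p = \<Psi> q"
  have pV: "p \<in> V" and pU: "p \<in> U" unfolding p_def using PsiV PsiU q by auto
  have qp: "Phi p = q" unfolding p_def using right q by auto
  obtain P1 where P1: "((\<lambda>q. fst (\<Psi> q)) has_derivative P1) (at q)" using d1 q unfolding differentiable_def by blast
  obtain P2 where P2: "((\<lambda>q. snd (\<Psi> q)) has_derivative P2) (at q)" using d2 q unfolding differentiable_def by blast
  have "((\<lambda>q. (fst (\<Psi> q), snd (\<Psi> q))) has_derivative (\<lambda>v. (P1 v, P2 v))) (at q)"
    by (rule has_derivative_Pair[OF P1 P2])
  hence "\<Psi> differentiable at q" unfolding differentiable_def by auto
  moreover have "G differentiable at (\<Psi> q)" using dat[OF G] pU unfolding p_def by simp
  ultimately have "(G \<circ> \<Psi>) differentiable at q" by (rule differentiable_chain_at)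
  hence Fd: "(\<lambda>q. G (\<Psi> q)) differentiable at q" by (simp add: o_def)
  define F' where "F' = frechet_derivative (\<lambda>q. G (\<Psi> q)) (at q)"
  have F': "((\<lambda>q. G (\<Psi> q)) has_derivative F') (at q)" using Fd frechet_derivative_works unfolding F'_def by blast
  have lF: "linear F'" using F' has_derivative_linear by blast
  define X' where "X' = frechet_derivative xfun (at p)"
  have X': "(xfun has_derivative X') (at p)" using x_diff[OF pU] frechet_derivative_works unfolding X'_def by blast
  have Phid: "(Phi has_derivative (\<lambda>v. (X' v, snd v))) (at p)"
    unfolding Phi_eq by (intro has_derivative_Pair X' bounded_linear_imp_has_derivative bounded_linear_snd)
  have comp: "((\<lambda>q. G (\<Psi> q)) \<circ> Phi has_derivative F' \<circ> (\<lambda>v. (X' v, snd v))) (at p)"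
    using diff_chain_at[OF Phid] F' qp by simp
  have Gd: "(G has_derivative F' \<circ> (\<lambda>v. (X' v, snd v))) (at p)"
    by (rule has_derivative_transform_within_open[OF comp V_open pV]) (use left in auto)
  have a1: "pd1 G p = F' (X' (1,0), 0)" using pd1_frechet[OF Gd] by simp
  have a2: "pd2 G p = F' (X' (0,1), 1)" using pd2_frechet[OF Gd] by simp
  have x1: "X' (1,0) = pd1 xfun p" using pd1_frechet[OF X'] by simp
  have x2: "X' (0,1) = pd2 xfun p" using pd2_frechet[OF X'] by simp
  have f1: "pd1 (\<lambda>q. G (\<Psi> q)) q = F' (1,0)" using pd1_frechet[OF F'] .
  have f2: "pd2 (\<lambda>q. G (\<Psi> q)) q = F' (0,1)" using pd2_frechet[OF F'] .
  have b1: "pd1 G p = pd1 xfun p * F' (1,0)" unfolding a1 x1 using lin2[OF lF, of "pd1 xfun p" 0] by simp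
  have b2: "pd2 G p = uS p * F' (1,0) + F' (0,1)" unfolding a2 x2 pd2x[OF pU] using lin2[OF lF, of "uS p" 1] by simp
  have r: "rho p * pd1 xfun p = 1" using rho_x[OF pU] .
  have c1: "pd1 (\<lambda>q. G (\<Psi> q)) q = rho p * pd1 G p" unfolding f1 b1 using r by (metis mult.assoc mult_1)
  have c2: "pd2 (\<lambda>q. G (\<Psi> q)) q = pd2 G p - uS p * rho p * pd1 G p"
    unfolding f2 b2 using c1 f1 by (simp add: mult.assoc)
  show ?thesis unfolding Dx_def Dt_def p_def[symmetric] using c1 c2 by simp
qed

lemma chain1: "smooth_on2 U G \<Longrightarrow> q \<in> Phi ` V \<Longrightarrow> pd1 (\<lambda>q. G (\<Psi> q)) q = Dx G (\<Psi> q)" using chain by blast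
lemma chain2: "smooth_on2 U G \<Longrightarrow> q \<in> Phi ` V \<Longrightarrow> pd2 (\<lambda>q. G (\<Psi> q)) q = Dt G (\<Psi> q)" using chain by blast

end

context hs3 begin

lemma final3:
  fixes uu rr m
  defines "uu \<equiv> (\<lambda>q. - pd2 (pd2 (\<lambda>q. ln \<bar>g q\<bar>)) (\<Psi> q))"
    and "rr \<equiv> (\<lambda>q. rho (\<Psi> q))"
    and "m \<equiv> (\<lambda>q. 2 - pd1 (pd1 uu) q)"
  assumes q: "q \<in> Phi ` V"
  shows "pd2 rr q + pd1 (\<lambda>q'. rr q' * uu q') q = 0
       \<and> pd2 m q + uu q * pd1 m q + 2 * m q * pd1 uu q - \<sigma> * rr q * pd1 rr q = 0
       \<and> pd1 (pd1 (pd2 uu)) q - 4 * pd1 uu q + 2 * pd1 uu q * pd1 (pd1 uu) q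
           + uu q * pd1 (pd1 (pd1 uu)) q = - \<sigma> * rr q * pd1 rr q"
proof -
  define p where "p = \<Psi> q"
  have pU: "p \<in> U" unfolding p_def using PsiU q .
  define A where "A = Dx uS"
  define B where "B = Dx A"
  define C where "C = Dt uS"
  define mm where "mm = (\<lambda>p. 2 - B p)"
  have smA[simp]: "smooth_on2 U A" unfolding A_def by simp
  have smB[simp]: "smooth_on2 U B" unfolding B_def by simp
  have smC[simp]: "smooth_on2 U C" unfolding C_def by simp
  have smmm[simp]: "smooth_on2 U mm" unfolding mm_def by simp
  have uuW: "uu q' = uS (\<Psi> q')" if "q' \<in> Phi ` V" for q'
    unfolding uu_def using u_eq[OF PsiU[OF that]] .
  have e1: "pd1 uu q' = A (\<Psi> q')" if "q' \<in> Phi ` V" for q'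
    using locW1[OF that uuW] chain1[OF sm_uS that] unfolding A_def by simp
  have e2: "pd1 (pd1 uu) q' = B (\<Psi> q')" if "q' \<in> Phi ` V" for q'
    using locW1[OF that e1] chain1[OF smA that] unfolding B_def by simp
  have e3: "pd1 (pd1 (pd1 uu)) q = Dx B p"
    using locW1[OF q e2] chain1[OF smB q] unfolding p_def by simp
  have f1: "pd2 uu q' = C (\<Psi> q')" if "q' \<in> Phi ` V" for q'
    using locW2[OF that uuW] chain2[OF sm_uS that] unfolding C_def by simp
  have f2: "pd1 (pd2 uu) q' = Dx C (\<Psi> q')" if "q' \<in> Phi ` V" for q'
    using locW1[OF that f1] chain1[OF smC that] by simp
  have f3: "pd1 (pd1 (pd2 uu)) q = Dx (Dx C) p"
    using locW1[OF q f2] chain1[OF sm_Dx[OF smC] q] unfolding p_def by simp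
  have mW: "m q' = mm (\<Psi> q')" if "q' \<in> Phi ` V" for q'
    unfolding m_def mm_def using e2[OF that] by simp
  have m1: "pd1 m q = Dx mm p" using locW1[OF q mW] chain1[OF smmm q] unfolding p_def by simp
  have m2: "pd2 m q = Dt mm p" using locW2[OF q mW] chain2[OF smmm q] unfolding p_def by simp
  have r1: "pd1 rr q = Dx rho p" unfolding rr_def p_def using chain1[OF sm_rho q] .
  have r2: "pd2 rr q = Dt rho p" unfolding rr_def p_def using chain2[OF sm_rho q] .
  have ru: "rr q' * uu q' = (\<lambda>p. rho p * uS p) (\<Psi> q')" if "q' \<in> Phi ` V" for q'
    unfolding rr_def using uuW[OF that] by simp
  have ru1: "pd1 (\<lambda>q'. rr q' * uu q') q = Dx (\<lambda>p. rho p * uS p) p"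
    using locW1[OF q ru] chain1[of "\<lambda>p. rho p * uS p" q] q unfolding p_def by simp
  have uq: "uu q = uS p" unfolding p_def using uuW[OF q] .
  have mq: "m q = mm p" unfolding p_def using mW[OF q] .
  have rq: "rr q = rho p" unfolding rr_def p_def ..
  have a1: "pd1 uu q = A p" unfolding p_def using e1[OF q] .
  have b1: "pd1 (pd1 uu) q = B p" unfolding p_def using e2[OF q] .
  have ms: "pd2 mm p + 2 * mm p * A p - \<sigma> * (rho p)^2 * pd1 rho p = 0"
    using main_ys[OF pU] unfolding mm_def B_def A_def .
  have cid: "pd2 rho p = - ((rho p)^2 * pd1 uS p)" using cont_id[OF pU] by simp
  have E1: "Dt rho p + Dx (\<lambda>p. rho p * uS p) p = 0"
    unfolding Dt_def Dx_def using pU cid by (simp add: algebra_simps power2_eq_square)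
  have E2: "Dt mm p + uS p * Dx mm p + 2 * mm p * A p - \<sigma> * rho p * Dx rho p = 0"
  proof -
    have "Dt mm p + uS p * Dx mm p + 2 * mm p * A p - \<sigma> * rho p * Dx rho p
        = pd2 mm p + 2 * mm p * A p - \<sigma> * (rho p)^2 * pd1 rho p"
      unfolding Dt_def[of mm] Dx_def[of mm] Dx_def[of rho] by (simp add: algebra_simps power2_eq_square)
    thus ?thesis using ms by simp
  qed
  have c1: "Dx C q' = Dt A q'" if "q' \<in> U" for q'
    unfolding A_def C_def using commut[OF sm_uS that] by simp
  have "Dx (Dx C) p = rho p * pd1 (Dx C) p" unfolding Dx_def[of "Dx C"] ..
  also have "\<dots> = rho p * pd1 (Dt A) p" using loc1[OF pU c1] by simp
  also have "\<dots> = Dx (Dt A) p" unfolding Dx_def[of "Dt A"] ..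
  also have "\<dots> = Dt (Dx A) p" using commut[OF smA pU] by simp
  finally have DDC: "Dx (Dx C) p = Dt B p" unfolding B_def .
  have pm: "pd2 mm p = - pd2 B p" unfolding mm_def using pU by simp
  have E3: "Dx (Dx C) p - 4 * A p + 2 * A p * B p + uS p * Dx B p = - \<sigma> * rho p * Dx rho p"
  proof -
    have "Dx (Dx C) p - 4 * A p + 2 * A p * B p + uS p * Dx B p = pd2 B p - 4 * A p + 2 * A p * B p"
      unfolding DDC Dt_def[of B] Dx_def[of B] by (simp add: algebra_simps)
    also have "\<dots> = - \<sigma> * (rho p)^2 * pd1 rho p" using ms pm unfolding mm_def by (simp add: algebra_simps)
    also have "\<dots> = - \<sigma> * rho p * Dx rho p" unfolding Dx_def[of rho] by (simp add: power2_eq_square)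
    finally show ?thesis .
  qed
  show ?thesis
    unfolding r1 r2 ru1 m1 m2 uq mq rq a1 b1 e3 f3
    using E1 E2 E3 unfolding mm_def by simp
qed

end

theorem theorem1:
  fixes \<sigma> :: real and U :: "(real \<times> real) set" and f g h :: "real \<times> real \<Rightarrow> real"
  assumes sigma_pos: "\<sigma> > 0"
    and U_open: "open U"
    and smooth: "smooth_on2 U f" "smooth_on2 U g" "smooth_on2 U h"
    and nonzero: "\<forall>p\<in>U. f p \<noteq> 0 \<and> g p \<noteq> 0 \<and> h p \<noteq> 0"
    and eq1: "\<forall>p\<in>U. (1/2) * hirota_12 g g p - g p * g p = - (f p * h p)"
    and eq2: "\<forall>p\<in>U. (1 / sqrt \<sigma>) * hirota_2 f h p + f p * h p = (g p)\<^sup>2"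
    and eq3: "\<forall>p\<in>U. hirota_12 f h p + (2 / sqrt \<sigma>) * hirota_2 f h p
                      + sqrt \<sigma> * hirota_1 f h p = 0"
  defines "x \<equiv> (\<lambda>p. fst p - pd2 (\<lambda>q. ln \<bar>g q\<bar>) p)"
    and "\<Phi> \<equiv> (\<lambda>p. (fst p - pd2 (\<lambda>q. ln \<bar>g q\<bar>) p, snd p))"
    and "u \<equiv> (\<lambda>p. - pd2 (pd2 (\<lambda>q. ln \<bar>g q\<bar>)) p)"
    and "\<rho> \<equiv> (\<lambda>p. (g p)\<^sup>2 / (f p * h p))"
  shows "(\<forall>p\<in>U. pd1 x p = f p * h p / (g p)\<^sup>2 \<and> pd1 x p = 1 / \<rho> p \<and> pd1 x p \<noteq> 0
                 \<and> pd2 x p = u p)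
       \<and> (\<forall>p\<in>U. \<exists>V. p \<in> V \<and> open V \<and> V \<subseteq> U \<and> inj_on \<Phi> V \<and> open (\<Phi> ` V))
       \<and> (\<forall>V \<Psi>. V \<subseteq> U \<longrightarrow> open V \<longrightarrow> open (\<Phi> ` V)
              \<longrightarrow> (\<forall>p\<in>V. \<Psi> (\<Phi> p) = p) \<longrightarrow> (\<forall>q\<in>\<Phi> ` V. \<Phi> (\<Psi> q) = q)
              \<longrightarrow> smooth_on2 (\<Phi> ` V) (\<lambda>q. fst (\<Psi> q))
              \<longrightarrow> smooth_on2 (\<Phi> ` V) (\<lambda>q. snd (\<Psi> q))
              \<longrightarrow> (let uu = (\<lambda>q. u (\<Psi> q)); rr = (\<lambda>q. \<rho> (\<Psi> q));
                       m = (\<lambda>q. 2 - pd1 (pd1 uu) q)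
                   in \<forall>q\<in>\<Phi> ` V.
                        pd2 rr q + pd1 (\<lambda>q'. rr q' * uu q') q = 0
                      \<and> pd2 m q + uu q * pd1 m q + 2 * m q * pd1 uu q - \<sigma> * rr q * pd1 rr q = 0
                      \<and> pd1 (pd1 (pd2 uu)) q - 4 * pd1 uu q + 2 * pd1 uu q * pd1 (pd1 uu) q
                          + uu q * pd1 (pd1 (pd1 uu)) q = - \<sigma> * rr q * pd1 rr q))"
proof -
  interpret H: hs U \<sigma> f g h
    using sigma_pos U_open smooth nonzero eq1 eq2 eq3 by unfold_locales auto
  have xe: "x = H.xfun" unfolding x_def H.xfun_def ..
  have Pe: "\<Phi> = H.Phi" unfolding \<Phi>_def H.Phi_def ..
  have re: "\<rho> = H.rho" unfolding \<rho>_def H.rho_def ..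
  have P1: "\<forall>p\<in>U. pd1 x p = f p * h p / (g p)\<^sup>2 \<and> pd1 x p = 1 / \<rho> p \<and> pd1 x p \<noteq> 0 \<and> pd2 x p = u p"
    unfolding xe re u_def using H.pd1x H.pd2x H.u_eq by (auto simp: H.rho_def)
  have P2: "\<forall>p\<in>U. \<exists>V. p \<in> V \<and> open V \<and> V \<subseteq> U \<and> inj_on \<Phi> V \<and> open (\<Phi> ` V)"
    unfolding Pe using H.local_inj by blast
  have P3: "\<forall>V \<Psi>. V \<subseteq> U \<longrightarrow> open V \<longrightarrow> open (\<Phi> ` V)
              \<longrightarrow> (\<forall>p\<in>V. \<Psi> (\<Phi> p) = p) \<longrightarrow> (\<forall>q\<in>\<Phi> ` V. \<Phi> (\<Psi> q) = q)
              \<longrightarrow> smooth_on2 (\<Phi> ` V) (\<lambda>q. fst (\<Psi> q))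
              \<longrightarrow> smooth_on2 (\<Phi> ` V) (\<lambda>q. snd (\<Psi> q))
              \<longrightarrow> (let uu = (\<lambda>q. u (\<Psi> q)); rr = (\<lambda>q. \<rho> (\<Psi> q));
                       m = (\<lambda>q. 2 - pd1 (pd1 uu) q)
                   in \<forall>q\<in>\<Phi> ` V.
                        pd2 rr q + pd1 (\<lambda>q'. rr q' * uu q') q = 0
                      \<and> pd2 m q + uu q * pd1 m q + 2 * m q * pd1 uu q - \<sigma> * rr q * pd1 rr q = 0
                      \<and> pd1 (pd1 (pd2 uu)) q - 4 * pd1 uu q + 2 * pd1 uu q * pd1 (pd1 uu) q
                          + uu q * pd1 (pd1 (pd1 uu)) q = - \<sigma> * rr q * pd1 rr q)"
  proof (intro allI impI)
    fix V \<Psi>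
    assume a: "V \<subseteq> U" "open V" "open (\<Phi> ` V)" "\<forall>p\<in>V. \<Psi> (\<Phi> p) = p" "\<forall>q\<in>\<Phi> ` V. \<Phi> (\<Psi> q) = q"
      "smooth_on2 (\<Phi> ` V) (\<lambda>q. fst (\<Psi> q))" "smooth_on2 (\<Phi> ` V) (\<lambda>q. snd (\<Psi> q))"
    have d1: "\<forall>q\<in>H.Phi ` V. (\<lambda>q. fst (\<Psi> q)) differentiable at q" using a(6) smooth_diff_at unfolding Pe by blast
    have d2: "\<forall>q\<in>H.Phi ` V. (\<lambda>q. snd (\<Psi> q)) differentiable at q" using a(7) smooth_diff_at unfolding Pe by blast
    interpret H3: hs3 U \<sigma> f g h V \<Psi>
      using sigma_pos U_open smooth nonzero eq1 eq2 eq3 a d1 d2 unfolding Pe by unfold_locales auto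
    show "let uu = (\<lambda>q. u (\<Psi> q)); rr = (\<lambda>q. \<rho> (\<Psi> q));
                       m = (\<lambda>q. 2 - pd1 (pd1 uu) q)
                   in \<forall>q\<in>\<Phi> ` V.
                        pd2 rr q + pd1 (\<lambda>q'. rr q' * uu q') q = 0
                      \<and> pd2 m q + uu q * pd1 m q + 2 * m q * pd1 uu q - \<sigma> * rr q * pd1 rr q = 0
                      \<and> pd1 (pd1 (pd2 uu)) q - 4 * pd1 uu q + 2 * pd1 uu q * pd1 (pd1 uu) q
                          + uu q * pd1 (pd1 (pd1 uu)) q = - \<sigma> * rr q * pd1 rr q"
      unfolding Let_def u_def re Pe by (intro ballI) (rule H3.final3)
  qed
  show ?thesis using P1 P2 P3 by blast
qed


end
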